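(* Let $A\in\mathbb{R}^{m\times n}$, $c\in\mathbb{R}^n$, $\lambda>0$, let $h:\mathbb{R}^m\to\mathbb{R}$ be convex and twice continuously differentiable, and let $p:\mathbb{R}^n\to(-\infty,+\infty]$ be closed, proper, convex and piecewise linear-quadratic. Let $f(x):=h(Ax)-\langle c,x\rangle+\lambda p(x)$, assume the solution set $\Omega$ of $\min_x f(x)$ is nonempty and compact, and let $\mathcal{T}_f:=\partial f$. If $h$ is strongly convex on every compact convex set in $\mathbb{R}^m$, then for every $\tau>0$, every $x^0\in\mathbb{R}^n$ and every summable nonnegative sequence $\{\epsilon_k\}_{k\ge0}$, with $\mathcal{M}:=I_n+\tau A^TA$, there exists $\kappa>0$ such that $$\mathrm{dist}(x,\Omega)\le\kappa\,\mathrm{dist}(0,\mathcal{T}_f(x))\quad\text{for all }x\in\mathbb{R}^n\text{ with }\mathrm{dist}(x,\Omega)\le\sum_{k=0}^\infty\epsilon_k+\mathrm{dist}_{\mathcal{M}}(x^0,\Omega).$$ Moreover, the strong convexity property of $h$ on every compact convex set holds in the two special cases (1) $h(y)=\sum_{i=1}^m(y_i-b_i)^2/2$ for a given $b\in\mathbb{R}^m$; (2) $h(y)=\sum_{i=1}^m\log(1+\exp(-b_iy_i))$ for a given $b\in\{-1,1\}^m$.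
   Context: A function $p$ is piecewise linear-quadratic if its effective domain is a union of finitely many polyhedral sets, on each of which $p$ is given by a quadratic (possibly linear) polynomial. $\mathrm{dist}_{\mathcal{M}}(x,\mathcal{C}):=\inf_{x'\in\mathcal{C}}\sqrt{\langle x-x',\mathcal{M}(x-x')\rangle}$; $\mathrm{dist}$ is the Euclidean distance, with $\mathrm{dist}(0,\emptyset)=+\infty$. *)

theory Defs
  imports "HOL-Analysis.Analysis" "HOL-Library.Extended_Real"
begin

text \<open>Extended-real-valued functions on R^n (values in (-inf,+inf] are required separately).\<close>

definition edom :: "('a \<Rightarrow> ereal) \<Rightarrow> 'a set" where
  "edom p = {x. p x < \<infinity>}"

definition epigraph_e :: "('a \<Rightarrow> ereal) \<Rightarrow> ('a \<times> real) set" where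
  "epigraph_e p = {(x, r). p x \<le> ereal r}"

definition proper_fun :: "('a \<Rightarrow> ereal) \<Rightarrow> bool" where
  "proper_fun p \<longleftrightarrow> (\<forall>x. p x \<noteq> -\<infinity>) \<and> (\<exists>x. p x < \<infinity>)"

definition closed_fun :: "('a::topological_space \<Rightarrow> ereal) \<Rightarrow> bool" where
  "closed_fun p \<longleftrightarrow> closed (epigraph_e p)"

definition convex_fun :: "('a::real_vector \<Rightarrow> ereal) \<Rightarrow> bool" where
  "convex_fun p \<longleftrightarrow> convex (epigraph_e p)"

definition piecewise_lq :: "(real^'n \<Rightarrow> ereal) \<Rightarrow> bool" where
  "piecewise_lq p \<longleftrightarrow>
     (\<exists>S. finite S \<and> edom p = \<Union>S \<and>
        (\<forall>P\<in>S. polyhedron P \<and>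
           (\<exists>(Q::real^'n^'n) (a::real^'n) (\<alpha>::real).
               \<forall>x\<in>P. p x = ereal (x \<bullet> (Q *v x) + a \<bullet> x + \<alpha>))))"

definition twice_cont_diff :: "(real^'m \<Rightarrow> real) \<Rightarrow> bool" where
  "twice_cont_diff h \<longleftrightarrow>
     (\<exists>(g::real^'m \<Rightarrow> real^'m) (H::real^'m \<Rightarrow> real^'m^'m).
        (\<forall>y. (h has_derivative (\<lambda>v. g y \<bullet> v)) (at y)) \<and>
        (\<forall>y. (g has_derivative (\<lambda>v. H y *v v)) (at y)) \<and>
        continuous_on UNIV H)"

definition strongly_convex_on :: "'a::real_normed_vector set \<Rightarrow> ('a \<Rightarrow> real) \<Rightarrow> bool" where
  "strongly_convex_on K h \<longleftrightarrow>
     (\<exists>\<mu>>0. \<forall>x\<in>K. \<forall>y\<in>K. \<forall>t::real. 0 \<le> t \<and> t \<le> 1 \<longrightarrow>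
        h ((1 - t) *\<^sub>R x + t *\<^sub>R y)
          \<le> (1 - t) * h x + t * h y - \<mu> / 2 * t * (1 - t) * (norm (x - y))\<^sup>2)"

definition strongly_convex_on_compacts :: "('a::real_normed_vector \<Rightarrow> real) \<Rightarrow> bool" where
  "strongly_convex_on_compacts h \<longleftrightarrow>
     (\<forall>K. compact K \<and> convex K \<longrightarrow> strongly_convex_on K h)"

definition subdiff :: "('a::real_inner \<Rightarrow> ereal) \<Rightarrow> 'a \<Rightarrow> 'a set" where
  "subdiff f x = {v. f x < \<infinity> \<and> (\<forall>z. f x + ereal (v \<bullet> (z - x)) \<le> f z)}"

text \<open>distance from a point to a set, with dist(x, {}) = +inf\<close>
definition edist_set :: "'a::metric_space \<Rightarrow> 'a set \<Rightarrow> ereal" where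
  "edist_set x S = (if S = {} then \<infinity> else ereal (infdist x S))"

definition dist_M :: "real^'n^'n \<Rightarrow> real^'n \<Rightarrow> (real^'n) set \<Rightarrow> real" where
  "dist_M M x C = (INF x'\<in>C. sqrt ((x - x') \<bullet> (M *v (x - x'))))"

end

theory Submission
  imports Defs
begin


lemma hoffman_cone:
  fixes I :: "('a::euclidean_space \<times> real) set"
  assumes "finite I"
  shows "\<exists>C\<ge>0. \<forall>w. (\<forall>d. (\<forall>q\<in>I. fst q \<bullet> d \<le> 0) \<longrightarrow> w \<bullet> d \<le> 0) \<longrightarrow>
            norm w \<le> C * (\<Sum>q\<in>I. max 0 (fst q \<bullet> w))"
proof -
  define W where "W = {w::'a. \<forall>d. (\<forall>q\<in>I. fst q \<bullet> d \<le> 0) \<longrightarrow> w \<bullet> d \<le> 0}"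
  define r where "r = (\<lambda>w::'a. \<Sum>q\<in>I. max 0 (fst q \<bullet> w))"
  define T where "T = W \<inter> sphere 0 1"
  have Weq: "W = (\<Inter>d\<in>{d. \<forall>q\<in>I. fst q \<bullet> d \<le> 0}. {w. d \<bullet> w \<le> 0})"
    by (auto simp: W_def inner_commute)
  have "closed W" unfolding Weq by (intro closed_INT ballI closed_halfspace_le)
  then have cT: "compact T" unfolding T_def by (intro closed_Int_compact compact_sphere)
  have rnn: "r w \<ge> 0" for w unfolding r_def by (intro sum_nonneg) auto
  have cone: "w /\<^sub>R norm w \<in> T" if "w \<in> W" "w \<noteq> 0" for w
    using that by (auto simp: T_def W_def intro!: mult_nonneg_nonpos)
  have rscale: "r (w /\<^sub>R norm w) = r w / norm w" if "w \<noteq> 0" for w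
  proof -
    have "r (w /\<^sub>R norm w) = (\<Sum>q\<in>I. max 0 (fst q \<bullet> w) / norm w)"
      unfolding r_def using that
      by (intro sum.cong refl) (auto simp: max_def zero_le_mult_iff divide_inverse_commute)
    also have "\<dots> = r w / norm w" unfolding r_def by (simp add: sum_divide_distrib)
    finally show ?thesis .
  qed
  show ?thesis
  proof (cases "T = {}")
    case True
    show ?thesis
      by (rule exI[of _ 0]) (use True cone in \<open>auto simp: W_def\<close>)
  next
    case False
    have "continuous_on T r" unfolding r_def by (intro continuous_intros)
    then obtain w0 where w0: "w0 \<in> T" "\<And>y. y \<in> T \<Longrightarrow> r w0 \<le> r y"
      using continuous_attains_inf[OF cT False] by blast
    have pos: "r w0 > 0"
    proof (rule ccontr)
      assume "\<not> r w0 > 0"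
      then have "r w0 = 0" using rnn[of w0] by auto
      then have "\<forall>q\<in>I. max 0 (fst q \<bullet> w0) = 0"
        unfolding r_def using assms by (subst (asm) sum_nonneg_eq_0_iff) auto
      then have "\<forall>q\<in>I. fst q \<bullet> w0 \<le> 0" by (metis max.absorb_iff1)
      then have "w0 \<bullet> w0 \<le> 0" using w0(1) by (auto simp: T_def W_def)
      then have "w0 = 0" by (metis inner_gt_zero_iff not_le)
      then show False using w0(1) by (auto simp: T_def)
    qed
    show ?thesis
    proof (rule exI[of _ "1 / r w0"], intro conjI allI impI)
      show "0 \<le> 1 / r w0" using pos by simp
      fix w assume wW: "\<forall>d. (\<forall>q\<in>I. fst q \<bullet> d \<le> 0) \<longrightarrow> w \<bullet> d \<le> 0"
      show "norm w \<le> 1 / r w0 * (\<Sum>q\<in>I. max 0 (fst q \<bullet> w))"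
      proof (cases "w = 0")
        case True then show ?thesis using rnn[of 0] pos by (simp add: r_def)
      next
        case False
        have "r w0 \<le> r w / norm w" using w0(2)[OF cone] wW False rscale by (auto simp: W_def)
        then have "r w0 * norm w \<le> r w" using False by (simp add: field_simps)
        then show ?thesis using pos by (simp add: field_simps r_def)
      qed
    qed
  qed
qed

lemma hoffman:
  fixes Cs :: "('a::euclidean_space \<times> real) set"
  assumes fin: "finite Cs" and Sdef: "S = {x. \<forall>q\<in>Cs. fst q \<bullet> x \<le> snd q}" and ne: "S \<noteq> {}"
  shows "\<exists>C\<ge>0. \<forall>x. infdist x S \<le> C * (\<Sum>q\<in>Cs. max 0 (fst q \<bullet> x - snd q))"
proof -
  have "\<forall>I\<in>Pow Cs. \<exists>C\<ge>0. \<forall>w. (\<forall>d. (\<forall>q\<in>I. fst q \<bullet> d \<le> 0) \<longrightarrow> w \<bullet> d \<le> 0) \<longrightarrow>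
            norm w \<le> C * (\<Sum>q\<in>I. max 0 (fst q \<bullet> w))"
    using fin by (auto intro!: hoffman_cone intro: finite_subset)
  then obtain CI where CI: "\<And>I. I \<in> Pow Cs \<Longrightarrow> CI I \<ge> 0"
    "\<And>I w. I \<in> Pow Cs \<Longrightarrow> (\<forall>d. (\<forall>q\<in>I. fst q \<bullet> d \<le> 0) \<longrightarrow> w \<bullet> d \<le> 0) \<Longrightarrow>
            norm w \<le> CI I * (\<Sum>q\<in>I. max 0 (fst q \<bullet> w))"
    by metis
  define C where "C = (\<Sum>I\<in>Pow Cs. CI I)"
  have C0: "C \<ge> 0" unfolding C_def using CI(1) by (intro sum_nonneg) auto
  have Seq: "S = (\<Inter>q\<in>Cs. {x. fst q \<bullet> x \<le> snd q})" using Sdef by auto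
  have clS: "closed S" unfolding Seq by (intro closed_INT ballI closed_halfspace_le)
  have cvS: "convex S" unfolding Seq by (intro convex_INT ballI convex_halfspace_le)
  show ?thesis
  proof (intro exI[of _ C] conjI allI C0)
    fix x
    define p where "p = closest_point S x"
    have pS: "p \<in> S" unfolding p_def using closest_point_exists[OF clS ne] by auto
    define I where "I = {q\<in>Cs. fst q \<bullet> p = snd q}"
    define w where "w = x - p"
    have IP: "I \<in> Pow Cs" by (auto simp: I_def)
    have wpol: "\<forall>d. (\<forall>q\<in>I. fst q \<bullet> d \<le> 0) \<longrightarrow> w \<bullet> d \<le> 0"
    proof (intro allI impI)
      fix d assume dI: "\<forall>q\<in>I. fst q \<bullet> d \<le> 0"
      have "\<forall>q\<in>Cs. eventually (\<lambda>t. fst q \<bullet> (p + t *\<^sub>R d) \<le> snd q) (at_right (0::real))"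
      proof
        fix q assume qC: "q \<in> Cs"
        show "eventually (\<lambda>t. fst q \<bullet> (p + t *\<^sub>R d) \<le> snd q) (at_right (0::real))"
        proof (cases "q \<in> I")
          case True
          have "fst q \<bullet> (p + t *\<^sub>R d) \<le> snd q" if "t > 0" for t
            using True dI that by (auto simp: I_def inner_add_right mult_nonneg_nonpos)
          then show ?thesis using eventually_at_right_less[of 0]
            by (auto elim: eventually_mono)
        next
          case False
          then have lt: "fst q \<bullet> p < snd q" using pS qC Sdef by (force simp: I_def)
          have "((\<lambda>t. fst q \<bullet> (p + t *\<^sub>R d)) \<longlongrightarrow> fst q \<bullet> (p + 0 *\<^sub>R d)) (at_right (0::real))"
            by (intro tendsto_intros)
          then have "eventually (\<lambda>t. fst q \<bullet> (p + t *\<^sub>R d) < snd q) (at_right (0::real))"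
            using lt by (intro order_tendstoD) auto
          then show ?thesis by (auto elim: eventually_mono)
        qed
      qed
      then have "eventually (\<lambda>t. \<forall>q\<in>Cs. fst q \<bullet> (p + t *\<^sub>R d) \<le> snd q) (at_right (0::real))"
        using fin by (rule eventually_ball_finite[rotated])
      then obtain b where b: "b > 0" "\<And>t. t > 0 \<Longrightarrow> t < b \<Longrightarrow> \<forall>q\<in>Cs. fst q \<bullet> (p + t *\<^sub>R d) \<le> snd q"
        unfolding eventually_at_right_field by auto
      have "p + (b/2) *\<^sub>R d \<in> S" using b Sdef by auto
      from closest_point_dot[OF cvS clS this, of x]
      have "w \<bullet> ((b/2) *\<^sub>R d) \<le> 0" by (simp add: p_def w_def)
      then show "w \<bullet> d \<le> 0" using b(1) by (simp add: mult_le_0_iff)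
    qed
    have "infdist x S \<le> dist x p" by (rule infdist_le[OF pS])
    also have "\<dots> = norm w" by (simp add: w_def dist_norm)
    also have "\<dots> \<le> CI I * (\<Sum>q\<in>I. max 0 (fst q \<bullet> w))" by (rule CI(2)[OF IP wpol])
    also have "(\<Sum>q\<in>I. max 0 (fst q \<bullet> w)) = (\<Sum>q\<in>I. max 0 (fst q \<bullet> x - snd q))"
      by (intro sum.cong refl) (auto simp: I_def w_def inner_diff_right)
    also have "\<dots> \<le> (\<Sum>q\<in>Cs. max 0 (fst q \<bullet> x - snd q))"
      using fin by (intro sum_mono2) (auto simp: I_def)
    finally have 1: "infdist x S \<le> CI I * (\<Sum>q\<in>Cs. max 0 (fst q \<bullet> x - snd q))"
      using CI(1)[OF IP] by (simp add: mult_left_mono order_trans)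
    have "CI I \<le> C" unfolding C_def using CI(1) fin IP
      by (intro member_le_sum) auto
    then have "CI I * (\<Sum>q\<in>Cs. max 0 (fst q \<bullet> x - snd q)) \<le> C * (\<Sum>q\<in>Cs. max 0 (fst q \<bullet> x - snd q))"
      by (intro mult_right_mono sum_nonneg) auto
    with 1 show "infdist x S \<le> C * (\<Sum>q\<in>Cs. max 0 (fst q \<bullet> x - snd q))" by linarith
  qed
qed



lemma inner_mv_transpose: "(y::real^'n) \<bullet> ((M::real^'n^'n) *v w) = (transpose M *v y) \<bullet> w"
  by (metis dot_lmul_matrix transpose_transpose vector_transpose_matrix)

lemma vm_inner: "(a::real^'n) \<bullet> (b v* (Q::real^'n^'n)) = b \<bullet> (Q *v a)"
  by (metis dot_lmul_matrix inner_commute)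

lemma quad_expand:
  fixes Q :: "real^'n^'n"
  shows "(y + w) \<bullet> (Q *v (y + w)) = y \<bullet> (Q *v y) + (Q *v y + transpose Q *v y) \<bullet> w + w \<bullet> (Q *v w)"
  by (simp add: algebra_simps inner_add_left inner_add_right vm_inner inner_commute)

lemma quad_scale:
  fixes Q :: "real^'n^'n"
  shows "(k *\<^sub>R v) \<bullet> (Q *v (k *\<^sub>R v)) = k\<^sup>2 * (v \<bullet> (Q *v v))"
  by (simp add: matrix_vector_mult_scaleR power2_eq_square)

lemma cvec_sym:
  fixes Q :: "real^'n^'n"
  shows "(Q *v u + transpose Q *v u) \<bullet> w = (Q *v w + transpose Q *v w) \<bullet> u"
  by (simp add: inner_add_left inner_add_right vm_inner inner_commute)

lemma cvec_self:
  fixes Q :: "real^'n^'n"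
  shows "(Q *v u + transpose Q *v u) \<bullet> u = 2 * (u \<bullet> (Q *v u))"
  by (simp add: inner_add_left inner_add_right vm_inner inner_commute)

lemma disc_le:
  fixes a b c :: real
  assumes "\<And>t. a + b * t + c * t\<^sup>2 \<ge> 0" "c \<ge> 0"
  shows "b\<^sup>2 \<le> 4 * a * c"
proof (cases "c = 0")
  case True
  have "b = 0"
  proof (rule ccontr)
    assume "b \<noteq> 0"
    then have "a + b * (-(a+1)/b) + c * (-(a+1)/b)\<^sup>2 \<ge> 0" using assms(1) by blast
    then show False using True \<open>b \<noteq> 0\<close> by (simp add: field_simps)
  qed
  then show ?thesis using True by simp
next
  case False
  then have cp: "c > 0" using assms(2) by simp
  have "a + b * (-b/(2*c)) + c * (-b/(2*c))\<^sup>2 \<ge> 0" using assms(1) by blast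
  then have "0 \<le> a - b\<^sup>2/(4*c)" using cp by (simp add: field_simps power2_eq_square)
  then show ?thesis using cp by (simp add: field_simps)
qed

lemma half_combo: "(1/2) *\<^sub>R x + (1/2) *\<^sub>R y = y + (1/2) *\<^sub>R (x - y)" for x y :: "'a::real_vector"
proof -
  have "(1/2) *\<^sub>R y + (1/2) *\<^sub>R y = y" by (simp flip: scaleR_left_distrib)
  then show ?thesis by (simp add: scaleR_diff_right algebra_simps)
qed

lemma quad_growth:
  fixes Q :: "real^'n^'n" and a :: "real^'n" and G :: "real^'n \<Rightarrow> real"
  assumes Gdef: "\<And>x. G x = x \<bullet> (Q *v x) + a \<bullet> x + a0"
    and poly: "polyhedron P" and zP: "z \<in> P" and Gz: "G z = 0"
    and Gnn: "\<And>x. x \<in> P \<Longrightarrow> G x \<ge> 0" and cvx: "convex_on P G"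
  shows "\<exists>Z C. Z \<subseteq> {x\<in>P. G x = 0} \<and> Z \<noteq> {} \<and> C \<ge> 0 \<and>
            (\<forall>x\<in>P. infdist x Z \<le> C * (sqrt (G x) + G x))"
proof -
  define S where "S v = v \<bullet> (Q *v v)" for v
  define cv where "cv u = Q *v u + transpose Q *v u" for u
  define gv where "gv y = cv y + a" for y
  have exp: "G (y + w) = G y + gv y \<bullet> w + S w" for y w
    unfolding Gdef S_def gv_def cv_def quad_expand by (simp add: inner_add_left inner_add_right)
  have Sscale: "S (k *\<^sub>R v) = k\<^sup>2 * S v" for k v unfolding S_def by (rule quad_scale)
  have Sexp2: "S (u + t *\<^sub>R w) = S u + t * (cv u \<bullet> w) + t\<^sup>2 * S w" for u w t
    unfolding S_def cv_def quad_expand by (simp add: matrix_vector_mult_scaleR power2_eq_square)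
  have cvxP: "convex P" using poly by (rule polyhedron_imp_convex)
  have Spos: "S (x - y) \<ge> 0" if "x \<in> P" "y \<in> P" for x y
  proof -
    have "G ((1/2) *\<^sub>R x + (1/2) *\<^sub>R y) \<le> (1/2) * G x + (1/2) * G y"
    proof -
      have "\<forall>u\<ge>0. \<forall>v\<ge>0. u + v = 1 \<longrightarrow> G (u *\<^sub>R x + v *\<^sub>R y) \<le> u * G x + v * G y"
        using cvx that unfolding convex_on_def by blast
      from this[rule_format, of "1/2" "1/2"] show ?thesis by simp
    qed
    moreover have "(1/2) *\<^sub>R x + (1/2) *\<^sub>R y = y + (1/2) *\<^sub>R (x - y)" by (rule half_combo)
    moreover have "x = y + (x - y)" by simp
    ultimately have "G y + gv y \<bullet> ((1/2) *\<^sub>R (x - y)) + S ((1/2) *\<^sub>R (x - y))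
        \<le> (1/2) * (G y + gv y \<bullet> (x - y) + S (x - y)) + (1/2) * G y"
      by (metis exp)
    then have "G y + (gv y \<bullet> (x - y))/2 + S (x - y)/4 \<le> (G y + gv y \<bullet> (x - y) + S (x - y))/2 + G y/2"
      by (simp add: Sscale power2_eq_square)
    then have "S (x - y) / 4 \<le> S (x - y) / 2" by (argo | (simp add: field_simps) | (smt (z3)) | (smt (cvc5)))
    then show ?thesis by linarith
  qed
  have cone: "S ((p - z) + t *\<^sub>R (x - z)) \<ge> 0" if "p \<in> P" "x \<in> P" for p x t
  proof (cases "t \<ge> 0")
    case True
    define x' where "x' = (1/(1+t)) *\<^sub>R p + (t/(1+t)) *\<^sub>R x"
    have "x' \<in> P" unfolding x'_def using True that
      by (intro convexD[OF cvxP]) (auto simp: field_simps)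
    moreover have "(1+t) *\<^sub>R x' = p + t *\<^sub>R x"
      using True unfolding x'_def scaleR_add_right scaleR_scaleR by simp
    then have "(p - z) + t *\<^sub>R (x - z) = (1+t) *\<^sub>R (x' - z)"
      by (simp add: algebra_simps)
    ultimately show ?thesis using Spos[of x' z] zP by (simp add: Sscale)
  next
    case False
    define s where "s = -t"
    have s0: "s > 0" using False by (simp add: s_def)
    define x' where "x' = (1/(1+s)) *\<^sub>R p + (s/(1+s)) *\<^sub>R z"
    define y' where "y' = (1/(1+s)) *\<^sub>R z + (s/(1+s)) *\<^sub>R x"
    have "x' \<in> P" unfolding x'_def using s0 that zP
      by (intro convexD[OF cvxP]) (auto simp: field_simps)
    moreover have "y' \<in> P" unfolding y'_def using s0 that zP
      by (intro convexD[OF cvxP]) (auto simp: field_simps)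
    moreover have eqs: "(1+s) *\<^sub>R x' = p + s *\<^sub>R z" "(1+s) *\<^sub>R y' = z + s *\<^sub>R x"
      using s0 unfolding x'_def y'_def scaleR_add_right scaleR_scaleR by simp_all
    moreover have "(p - z) + t *\<^sub>R (x - z) = (1+s) *\<^sub>R (x' - y')"
    proof -
      have "(1+s) *\<^sub>R (x' - y') = (p + s *\<^sub>R z) - (z + s *\<^sub>R x)"
        using eqs by (simp add: scaleR_diff_right)
      also have "\<dots> = (p - z) + t *\<^sub>R (x - z)" by (simp add: s_def algebra_simps)
      finally show ?thesis by simp
    qed
    ultimately show ?thesis using Spos[of x' y'] by (simp add: Sscale)
  qed
  have CS: "\<bar>cv (p - z) \<bullet> (x - z)\<bar> \<le> 2 * sqrt (S (p - z)) * sqrt (S (x - z))" if "p \<in> P" "x \<in> P" for p x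
  proof -
    have "(cv (p - z) \<bullet> (x - z))\<^sup>2 \<le> 4 * S (p - z) * S (x - z)"
      by (rule disc_le) (use cone[OF that] Spos[OF that(2) zP] in \<open>auto simp: Sexp2 mult.commute\<close>)
    then have "sqrt ((cv (p - z) \<bullet> (x - z))\<^sup>2) \<le> sqrt (4 * S (p - z) * S (x - z))"
      by (rule real_sqrt_le_mono)
    then show ?thesis by (simp add: real_sqrt_mult)
  qed
  have GS: "G x = gv z \<bullet> (x - z) + S (x - z)" for x
    using exp[of z "x - z"] Gz by simp
  have FO: "gv z \<bullet> (x - z) \<ge> 0" if xP: "x \<in> P" for x
  proof (rule ccontr)
    define L where "L = gv z \<bullet> (x - z)"
    define SS where "SS = S (x - z)"
    assume "\<not> gv z \<bullet> (x - z) \<ge> 0"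
    then have L0: "L < 0" by (simp add: L_def)
    have SS0: "SS \<ge> 0" using Spos[OF xP zP] by (simp add: SS_def)
    define t where "t = min 1 ((-L) / (2 * (SS + 1)))"
    have t0: "t > 0" "t \<le> 1" using L0 SS0 by (auto simp: t_def divide_neg_pos)
    have "t \<le> (-L) / (2 * (SS + 1))" by (simp add: t_def)
    then have "t * SS \<le> (-L) / (2 * (SS + 1)) * SS" using SS0 by (rule mult_right_mono)
    also have "\<dots> \<le> (-L)/2" using L0 SS0 by (simp add: field_simps)
    finally have tS: "t * SS \<le> -L/2" .
    have "z + t *\<^sub>R (x - z) = (1 - t) *\<^sub>R z + t *\<^sub>R x" by (simp add: algebra_simps)
    moreover have "(1 - t) *\<^sub>R z + t *\<^sub>R x \<in> P" using convexD_alt[OF cvxP zP xP, of t] t0 by simp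
    ultimately have "z + t *\<^sub>R (x - z) \<in> P" by simp
    then have "G (z + t *\<^sub>R (x - z)) \<ge> 0" by (rule Gnn)
    then have "t * L + t\<^sup>2 * SS \<ge> 0" using exp[of z "t *\<^sub>R (x - z)"] Gz
      by (simp add: Sscale L_def SS_def)
    then have "t * (L + t * SS) \<ge> 0" by (simp add: power2_eq_square algebra_simps)
    moreover have "L + t * SS < 0" using tS L0 by linarith
    ultimately show False using t0 by (simp add: mult_le_0_iff zero_le_mult_iff)
  qed
  have SleG: "S (x - z) \<le> G x" and gleG: "gv z \<bullet> (x - z) \<le> G x" if "x \<in> P" for x
    using GS[of x] FO[OF that] Spos[OF that zP] by auto
  define V where "V = (\<lambda>x. x - z) ` P"
  obtain B where B: "B \<subseteq> V" "independent B" "V \<subseteq> span B" "card B = dim V" by (rule basis_exists)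
  have finB: "finite B" using B(2) by (rule finiteI_independent)
  obtain F where F: "finite F" "P = \<Inter>F" "\<forall>h\<in>F. \<exists>a b. a \<noteq> 0 \<and> h = {x. a \<bullet> x \<le> b}"
    using poly unfolding polyhedron_def by blast
  then have "\<forall>h\<in>F. \<exists>q. h = {x. fst q \<bullet> x \<le> snd q}" by fastforce
  then obtain ab where ab: "\<forall>h\<in>F. h = {x. fst (ab h) \<bullet> x \<le> snd (ab h)}"
    by (rule bchoice[elim_format]) blast
  define CP where "CP = ab ` F"
  have Peq: "P = {x. \<forall>q\<in>CP. fst q \<bullet> x \<le> snd q}"
    using F(2) ab unfolding CP_def by auto
  define Cs where "Cs = CP \<union> (\<lambda>u. (cv u, cv u \<bullet> z)) ` B \<union> (\<lambda>u. (- cv u, - (cv u \<bullet> z))) ` B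
     \<union> {(gv z, gv z \<bullet> z), (- gv z, - (gv z \<bullet> z))}"
  have finCs: "finite Cs" unfolding Cs_def CP_def using F(1) finB by auto
  define Z where "Z = {x. \<forall>q\<in>Cs. fst q \<bullet> x \<le> snd q}"
  have Zchar: "x \<in> P \<and> gv z \<bullet> (x - z) = 0 \<and> (\<forall>u\<in>B. cv u \<bullet> (x - z) = 0)" if "x \<in> Z" for x
  proof -
    have m: "\<And>q. q \<in> Cs \<Longrightarrow> fst q \<bullet> x \<le> snd q" using that unfolding Z_def by blast
    have "x \<in> P" unfolding Peq using m unfolding Cs_def by blast
    moreover have "gv z \<bullet> (x - z) = 0"
    proof -
      have "(gv z, gv z \<bullet> z) \<in> Cs" "(- gv z, - (gv z \<bullet> z)) \<in> Cs" unfolding Cs_def by auto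
      from m[OF this(1)] m[OF this(2)] show ?thesis by (simp add: inner_diff_right)
    qed
    moreover have "cv u \<bullet> (x - z) = 0" if "u \<in> B" for u
    proof -
      have "(cv u, cv u \<bullet> z) \<in> Cs" "(- cv u, - (cv u \<bullet> z)) \<in> Cs" unfolding Cs_def using that by auto
      from m[OF this(1)] m[OF this(2)] show ?thesis by (simp add: inner_diff_right)
    qed
    ultimately show ?thesis by blast
  qed
  have zZ: "z \<in> Z"
  proof -
    have "fst q \<bullet> z \<le> snd q" if "q \<in> CP" for q using zP that Peq by auto
    then show ?thesis unfolding Z_def Cs_def by auto
  qed
  have ZsubG: "Z \<subseteq> {x\<in>P. G x = 0}"
  proof
    fix x assume xZ: "x \<in> Z"
    note xc = Zchar[OF xZ]
    have "x - z \<in> span B" using xc B(3) unfolding V_def by auto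
    then obtain c where c: "x - z = (\<Sum>v\<in>B. c v *\<^sub>R v)"
      using span_finite[OF finB] by auto
    have "2 * S (x - z) = cv (x - z) \<bullet> (x - z)" unfolding S_def cv_def by (rule cvec_self[symmetric])
    also have "\<dots> = (\<Sum>v\<in>B. c v * (cv (x - z) \<bullet> v))"
      by (subst (2) c) (simp add: inner_sum_right)
    also have "\<dots> = 0"
    proof (intro sum.neutral ballI)
      fix v assume vB: "v \<in> B"
      have "cv (x - z) \<bullet> v = cv v \<bullet> (x - z)" unfolding cv_def by (rule cvec_sym)
      then show "c v * (cv (x - z) \<bullet> v) = 0" using xc vB by simp
    qed
    finally have "S (x - z) = 0" by simp
    then show "x \<in> {x\<in>P. G x = 0}" using GS[of x] xc by simp
  qed
  obtain Ch where Ch: "Ch \<ge> 0" "\<And>x. infdist x Z \<le> Ch * (\<Sum>q\<in>Cs. max 0 (fst q \<bullet> x - snd q))"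
    using hoffman[OF finCs Z_def] zZ by blast
  define Kb where "Kb = (\<Sum>u\<in>B. 2 * sqrt (S u))"
  have SuB: "S u \<ge> 0" if "u \<in> B" for u
    using that B(1) Spos zP unfolding V_def by auto
  have Kb0: "Kb \<ge> 0" unfolding Kb_def using SuB by (auto intro: sum_nonneg)
  have termb: "max 0 (fst q \<bullet> x - snd q) \<le> G x + Kb * sqrt (G x)" if xP: "x \<in> P" and q: "q \<in> Cs" for x q
  proof -
    have G0: "G x \<ge> 0" using Gnn xP .
    have R0: "0 \<le> G x + Kb * sqrt (G x)" using G0 Kb0 by simp
    have KS: "0 \<le> Kb * sqrt (G x)" using G0 Kb0 by simp
    have bu: "\<bar>cv u \<bullet> (x - z)\<bar> \<le> Kb * sqrt (G x)" if uB: "u \<in> B" for u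
    proof -
      obtain p where p: "p \<in> P" "u = p - z" using uB B(1) unfolding V_def by auto
      have "\<bar>cv u \<bullet> (x - z)\<bar> \<le> 2 * sqrt (S u) * sqrt (S (x - z))" using CS[OF p(1) xP] p(2) by simp
      also have "\<dots> \<le> 2 * sqrt (S u) * sqrt (G x)"
        using SleG[OF xP] SuB[OF uB] by (intro mult_left_mono real_sqrt_le_mono) auto
      also have "2 * sqrt (S u) \<le> Kb" unfolding Kb_def using finB uB SuB
        by (intro member_le_sum) auto
      then have "2 * sqrt (S u) * sqrt (G x) \<le> Kb * sqrt (G x)"
        using G0 by (intro mult_right_mono) auto
      finally show ?thesis .
    qed
    have "q \<in> CP \<or> (\<exists>u\<in>B. q = (cv u, cv u \<bullet> z)) \<or> (\<exists>u\<in>B. q = (- cv u, - (cv u \<bullet> z)))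
          \<or> q = (gv z, gv z \<bullet> z) \<or> q = (- gv z, - (gv z \<bullet> z))"
      using q unfolding Cs_def by blast
    then show ?thesis
    proof (elim disjE bexE)
      assume "q \<in> CP"
      then have "fst q \<bullet> x \<le> snd q" using xP Peq by auto
      then show ?thesis using R0 by simp
    next
      fix u assume "u \<in> B" "q = (cv u, cv u \<bullet> z)"
      then show ?thesis using bu[of u] G0 by (auto simp: inner_diff_right)
    next
      fix u assume "u \<in> B" "q = (- cv u, - (cv u \<bullet> z))"
      then show ?thesis using bu[of u] G0 Kb0 by (auto simp: inner_diff_right)
    next
      assume "q = (gv z, gv z \<bullet> z)"
      then show ?thesis using gleG[OF xP] FO[OF xP] KS G0 by (auto simp: inner_diff_right)
    next
      assume "q = (- gv z, - (gv z \<bullet> z))"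
      then show ?thesis using gleG[OF xP] FO[OF xP] KS G0 R0 by (auto simp: inner_diff_right)
    qed
  qed
  define C where "C = Ch * real (card Cs) * (1 + Kb)"
  show ?thesis
  proof (intro exI conjI ballI)
    show "Z \<subseteq> {x\<in>P. G x = 0}" by (rule ZsubG)
    show "Z \<noteq> {}" using zZ by auto
    show "0 \<le> C" unfolding C_def using Ch Kb0 by simp
    fix x assume xP: "x \<in> P"
    have G0: "G x \<ge> 0" using Gnn xP .
    have "(\<Sum>q\<in>Cs. max 0 (fst q \<bullet> x - snd q)) \<le> real (card Cs) * (G x + Kb * sqrt (G x))"
      using termb[OF xP] by (rule sum_bounded_above)
    also have "\<dots> \<le> real (card Cs) * ((1 + Kb) * (sqrt (G x) + G x))"
      using G0 Kb0 by (intro mult_left_mono) (auto simp: algebra_simps)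
    finally have "Ch * (\<Sum>q\<in>Cs. max 0 (fst q \<bullet> x - snd q)) \<le> Ch * (real (card Cs) * ((1 + Kb) * (sqrt (G x) + G x)))"
      using Ch(1) by (rule mult_left_mono)
    then show "infdist x Z \<le> C * (sqrt (G x) + G x)" using Ch(2)[of x] unfolding C_def
      by (simp add: mult.assoc)
  qed
qed



lemma norm_sq_vec: "(norm (x::real^'m))\<^sup>2 = (\<Sum>i\<in>UNIV. (x $ i)\<^sup>2)"
proof -
  have "(norm x)\<^sup>2 = x \<bullet> x" by (rule power2_norm_eq_inner)
  also have "\<dots> = (\<Sum>i\<in>UNIV. (x $ i)\<^sup>2)" by (simp add: inner_vec_def power2_eq_square)
  finally show ?thesis .
qed

lemma sq_ident: "((1 - t) * a + t * c - bb)\<^sup>2 / 2 = (1 - t) * ((a - bb)\<^sup>2 / 2) + t * ((c - bb)\<^sup>2 / 2) - 1 / 2 * t * (1 - t) * (a - c)\<^sup>2"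
  for a c bb t :: real
proof -
  have "((1 - t) * a + t * c - bb)\<^sup>2 = (1 - t) * (a - bb)\<^sup>2 + t * (c - bb)\<^sup>2 - t * (1 - t) * (a - c)\<^sup>2"
    by (simp add: power2_eq_square algebra_simps)
  then show ?thesis by (simp add: field_simps)
qed

lemma part2: "strongly_convex_on_compacts (\<lambda>y::real^'m. \<Sum>i\<in>UNIV. (y $ i - b $ i)\<^sup>2 / 2)"
  unfolding strongly_convex_on_compacts_def strongly_convex_on_def
proof (intro allI impI exI[of _ 1] conjI ballI)
  fix K :: "(real^'m) set" and x y and t :: real
  show "(0::real) < 1" by simp
  have "(\<Sum>i\<in>UNIV. (((1 - t) *\<^sub>R x + t *\<^sub>R y) $ i - b $ i)\<^sup>2 / 2)
      = (\<Sum>i\<in>UNIV. (1 - t) * ((x $ i - b $ i)\<^sup>2 / 2) + t * ((y $ i - b $ i)\<^sup>2 / 2) - 1 / 2 * t * (1 - t) * ((x - y) $ i)\<^sup>2)"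
    by (intro sum.cong refl) (simp add: sq_ident)
  also have "\<dots> = (1 - t) * (\<Sum>i\<in>UNIV. (x $ i - b $ i)\<^sup>2 / 2) + t * (\<Sum>i\<in>UNIV. (y $ i - b $ i)\<^sup>2 / 2)
       - 1 / 2 * t * (1 - t) * (norm (x - y))\<^sup>2"
    by (simp add: norm_sq_vec sum.distrib sum_subtractf sum_distrib_left)
  finally show "(\<Sum>i\<in>UNIV. (((1 - t) *\<^sub>R x + t *\<^sub>R y) $ i - b $ i)\<^sup>2 / 2)
       \<le> (1 - t) * (\<Sum>i\<in>UNIV. (x $ i - b $ i)\<^sup>2 / 2) + t * (\<Sum>i\<in>UNIV. (y $ i - b $ i)\<^sup>2 / 2)
         - 1 / 2 * t * (1 - t) * (norm (x - y))\<^sup>2" by simp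
qed

lemma sc_combine: fixes pm p1 p2 c Mq a1 a2 D t :: real
  assumes "pm - c*Mq \<le> (1-t)*(p1 - c*a1) + t*(p2 - c*a2)" "(1-t)*a1 + t*a2 - Mq = D"
  shows "pm \<le> (1-t)*p1 + t*p2 - c*D"
proof -
  have "c*D = c*((1-t)*a1 + t*a2 - Mq)" using assms(2) by simp
  also have "\<dots> = c*((1-t)*a1) + c*(t*a2) - c*Mq" by (simp add: algebra_simps)
  finally have "c*D = c*((1-t)*a1) + c*(t*a2) - c*Mq" .
  moreover have "(1-t)*(p1 - c*a1) = (1-t)*p1 - c*((1-t)*a1)" by (simp add: algebra_simps)
  moreover have "t*(p2 - c*a2) = t*p2 - c*(t*a2)" by (simp add: algebra_simps)
  ultimately show ?thesis using assms(1) by linarith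
qed

definition psi :: "real \<Rightarrow> real" where "psi s = ln (1 + exp (- s))"

lemma psi_sc:
  fixes \<rho> :: real
  defines "\<mu>0 \<equiv> exp (- \<rho>) / (1 + exp \<rho>)\<^sup>2"
  assumes s1: "\<bar>s1\<bar> \<le> \<rho>" and s2: "\<bar>s2\<bar> \<le> \<rho>" and t: "0 \<le> t" "t \<le> 1"
  shows "psi ((1 - t) * s1 + t * s2) \<le> (1 - t) * psi s1 + t * psi s2 - \<mu>0 / 2 * t * (1 - t) * (s1 - s2)\<^sup>2"
proof -
  define f where "f s = psi s - \<mu>0 / 2 * s\<^sup>2" for s
  define f' where "f' s = - 1 / (1 + exp s) - \<mu>0 * s" for s
  define f'' where "f'' s = exp s / (1 + exp s)\<^sup>2 - \<mu>0" for s
  have d1: "DERIV f s :> f' s" for s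
  proof -
    have "DERIV f s :> (exp (- s) * (- 1) / (1 + exp (- s)) - \<mu>0 / 2 * (2 * s))"
      unfolding f_def psi_def
      by (rule derivative_eq_intros refl | simp add: add_pos_pos)+
    moreover have "exp (- s) * (- 1) / (1 + exp (- s)) - \<mu>0 / 2 * (2 * s) = f' s"
      unfolding f'_def by (simp add: exp_minus field_simps)
    ultimately show ?thesis by simp
  qed
  have d2: "DERIV f' s :> f'' s" for s
  proof -
    have ne: "1 + exp s \<noteq> 0" by (metis add_pos_pos exp_gt_zero less_irrefl zero_less_one)
    show ?thesis unfolding f'_def f''_def
      using ne by (auto intro!: derivative_eq_intros simp: field_simps power2_eq_square)
  qed
  have pos: "f'' s \<ge> 0" if "s \<in> {-\<rho>..\<rho>}" for s
  proof -
    have "exp (- \<rho>) \<le> exp s" using that by simp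
    moreover have "(1 + exp s)\<^sup>2 \<le> (1 + exp \<rho>)\<^sup>2" using that by (intro power_mono) auto
    moreover have "0 < 1 + exp s" using exp_gt_zero[of s] by linarith
    ultimately have "exp (- \<rho>) / (1 + exp \<rho>)\<^sup>2 \<le> exp s / (1 + exp s)\<^sup>2"
      by (intro frac_le) auto
    then show ?thesis unfolding f''_def \<mu>0_def by simp
  qed
  have cv: "convex_on {-\<rho>..\<rho>} f"
    by (rule f''_ge0_imp_convex[OF convex_real_interval(5) d1 d2 pos])
  have "f ((1 - t) *\<^sub>R s1 + t *\<^sub>R s2) \<le> (1 - t) * f s1 + t * f s2"
  proof -
    have "\<forall>x\<in>{-\<rho>..\<rho>}. \<forall>y\<in>{-\<rho>..\<rho>}. \<forall>u\<ge>0. \<forall>v\<ge>0. u + v = 1 \<longrightarrow> f (u * x + v * y) \<le> u * f x + v * f y"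
      using cv unfolding convex_on_def by simp
    moreover have "s1 \<in> {-\<rho>..\<rho>}" "s2 \<in> {-\<rho>..\<rho>}" using s1 s2 by auto
    ultimately have "f ((1 - t) * s1 + t * s2) \<le> (1 - t) * f s1 + t * f s2" using t by simp
    then show ?thesis by simp
  qed
  then have "psi ((1 - t) * s1 + t * s2) - \<mu>0 / 2 * ((1 - t) * s1 + t * s2)\<^sup>2
      \<le> (1 - t) * (psi s1 - \<mu>0 / 2 * s1\<^sup>2) + t * (psi s2 - \<mu>0 / 2 * s2\<^sup>2)"
    by (simp add: f_def)
  moreover have "(1 - t) * s1\<^sup>2 + t * s2\<^sup>2 - ((1 - t) * s1 + t * s2)\<^sup>2 = t * (1 - t) * (s1 - s2)\<^sup>2"
    by (simp add: power2_eq_square algebra_simps)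
  ultimately have "psi ((1 - t) * s1 + t * s2) \<le> (1 - t) * psi s1 + t * psi s2 - \<mu>0 / 2 * (t * (1 - t) * (s1 - s2)\<^sup>2)"
    by (rule sc_combine)
  then show ?thesis by (simp add: mult.assoc)
qed


lemma part3:
  fixes b :: "real^'m"
  assumes b: "\<forall>i. b $ i = -1 \<or> b $ i = 1"
  shows "strongly_convex_on_compacts (\<lambda>y::real^'m. \<Sum>i\<in>UNIV. ln (1 + exp (- (b $ i * y $ i))))"
  unfolding strongly_convex_on_compacts_def strongly_convex_on_def
proof (intro allI impI)
  fix K :: "(real^'m) set" assume K: "compact K \<and> convex K"
  then obtain \<rho> where \<rho>: "\<forall>y\<in>K. norm y \<le> \<rho>" using compact_imp_bounded bounded_iff by metis
  define \<mu>0 where "\<mu>0 = exp (- \<rho>) / (1 + exp \<rho>)\<^sup>2"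
  have bsq: "(b $ i)\<^sup>2 = 1" for i using b[rule_format, of i] by auto
  have babs: "\<bar>b $ i * y $ i\<bar> \<le> \<rho>" if "y \<in> K" for i y
  proof -
    have "\<bar>b $ i * y $ i\<bar> = \<bar>y $ i\<bar>" using b[rule_format, of i] by auto
    also have "\<dots> \<le> norm y" by (rule component_le_norm_cart)
    finally show ?thesis using \<rho> that by force
  qed
  have "0 < 1 + exp \<rho>" using exp_gt_zero[of \<rho>] by linarith
  then have mu0: "\<mu>0 > 0" unfolding \<mu>0_def by simp
  show "\<exists>\<mu>>0. \<forall>x\<in>K. \<forall>y\<in>K. \<forall>t. 0 \<le> t \<and> t \<le> 1 \<longrightarrow>
     (\<Sum>i\<in>UNIV. ln (1 + exp (- (b $ i * ((1 - t) *\<^sub>R x + t *\<^sub>R y) $ i))))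
     \<le> (1 - t) * (\<Sum>i\<in>UNIV. ln (1 + exp (- (b $ i * x $ i)))) + t * (\<Sum>i\<in>UNIV. ln (1 + exp (- (b $ i * y $ i))))
        - \<mu> / 2 * t * (1 - t) * (norm (x - y))\<^sup>2"
  proof (intro exI[of _ \<mu>0] conjI mu0 ballI allI impI)
    fix x y and t :: real assume xK: "x \<in> K" and yK: "y \<in> K" and t: "0 \<le> t \<and> t \<le> 1"
    have "(\<Sum>i\<in>UNIV. ln (1 + exp (- (b $ i * ((1 - t) *\<^sub>R x + t *\<^sub>R y) $ i))))
        = (\<Sum>i\<in>UNIV. psi ((1 - t) * (b $ i * x $ i) + t * (b $ i * y $ i)))"
      by (intro sum.cong refl) (simp add: psi_def algebra_simps)
    also have "\<dots> \<le> (\<Sum>i\<in>UNIV. (1 - t) * psi (b $ i * x $ i) + t * psi (b $ i * y $ i)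
         - \<mu>0 / 2 * t * (1 - t) * ((x - y) $ i)\<^sup>2)"
    proof (intro sum_mono)
      fix i
      have "(b $ i * x $ i - b $ i * y $ i)\<^sup>2 = ((x - y) $ i)\<^sup>2"
      proof -
        have "b $ i * x $ i - b $ i * y $ i = b $ i * (x $ i - y $ i)" by (simp add: right_diff_distrib)
        then have "(b $ i * x $ i - b $ i * y $ i)\<^sup>2 = (b $ i)\<^sup>2 * (x $ i - y $ i)\<^sup>2" by (simp add: power_mult_distrib)
        then show ?thesis using bsq[of i] by simp
      qed
      then show "psi ((1 - t) * (b $ i * x $ i) + t * (b $ i * y $ i))
          \<le> (1 - t) * psi (b $ i * x $ i) + t * psi (b $ i * y $ i) - \<mu>0 / 2 * t * (1 - t) * ((x - y) $ i)\<^sup>2"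
        using psi_sc[OF babs[OF xK, of i] babs[OF yK, of i], of t] t unfolding \<mu>0_def by simp
    qed
    also have "\<dots> = (1 - t) * (\<Sum>i\<in>UNIV. ln (1 + exp (- (b $ i * x $ i)))) + t * (\<Sum>i\<in>UNIV. ln (1 + exp (- (b $ i * y $ i))))
        - \<mu>0 / 2 * t * (1 - t) * (norm (x - y))\<^sup>2"
      by (simp add: norm_sq_vec sum.distrib sum_subtractf sum_distrib_left psi_def)
    finally show "(\<Sum>i\<in>UNIV. ln (1 + exp (- (b $ i * ((1 - t) *\<^sub>R x + t *\<^sub>R y) $ i))))
     \<le> (1 - t) * (\<Sum>i\<in>UNIV. ln (1 + exp (- (b $ i * x $ i)))) + t * (\<Sum>i\<in>UNIV. ln (1 + exp (- (b $ i * y $ i))))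
        - \<mu>0 / 2 * t * (1 - t) * (norm (x - y))\<^sup>2" .
  qed
qed



lemma dq_limit:
  fixes h :: "'a::real_normed_vector \<Rightarrow> real"
  assumes "(h has_derivative (\<lambda>v. g v)) (at y0)" "linear g"
  shows "((\<lambda>t. (h (y0 + t *\<^sub>R d) - h y0) / t) \<longlongrightarrow> g d) (at_right 0)"
proof -
  have l: "((\<lambda>t::real. y0 + t *\<^sub>R d) has_derivative (\<lambda>t. t *\<^sub>R d)) (at 0)"
    by (auto intro!: derivative_eq_intros)
  have "((h \<circ> (\<lambda>t::real. y0 + t *\<^sub>R d)) has_derivative ((\<lambda>v. g v) \<circ> (\<lambda>t. t *\<^sub>R d))) (at 0)"
    by (rule diff_chain_at[OF l]) (simp add: assms(1))
  moreover have "((\<lambda>v. g v) \<circ> (\<lambda>t. t *\<^sub>R d)) = (\<lambda>t. g d * t)"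
    using assms(2) by (auto simp: linear_scale)
  ultimately have "((\<lambda>t. h (y0 + t *\<^sub>R d)) has_field_derivative g d) (at 0)"
    by (simp add: has_field_derivative_def o_def)
  then have "((\<lambda>t. h (y0 + t *\<^sub>R d)) has_field_derivative g d) (at 0 within {0<..})"
    by (rule has_field_derivative_at_within)
  then show ?thesis unfolding has_field_derivative_iff by simp
qed

lemma sc_lower:
  fixes h :: "'a::real_normed_vector \<Rightarrow> real"
  assumes sc: "\<forall>x\<in>K. \<forall>y\<in>K. \<forall>t. 0 \<le> t \<and> t \<le> 1 \<longrightarrow>
        h ((1 - t) *\<^sub>R x + t *\<^sub>R y) \<le> (1 - t) * h x + t * h y - \<mu> / 2 * t * (1 - t) * (norm (x - y))\<^sup>2"
    and y0: "y0 \<in> K" and y: "y \<in> K" and d: "(h has_derivative g) (at y0)" and lin: "linear g"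
  shows "h y \<ge> h y0 + g (y - y0) + \<mu> / 2 * (norm (y - y0))\<^sup>2"
proof -
  define d where "d = y - y0"
  have lim1: "((\<lambda>t. (h (y0 + t *\<^sub>R d) - h y0) / t) \<longlongrightarrow> g d) (at_right 0)"
    using dq_limit[of h g y0 d] d lin by simp
  have lim2: "((\<lambda>t. h y - h y0 - \<mu> / 2 * (1 - t) * (norm d)\<^sup>2) \<longlongrightarrow> h y - h y0 - \<mu> / 2 * (1 - 0) * (norm d)\<^sup>2) (at_right (0::real))"
    by (intro tendsto_intros)
  have ev: "eventually (\<lambda>t. (h (y0 + t *\<^sub>R d) - h y0) / t \<le> h y - h y0 - \<mu> / 2 * (1 - t) * (norm d)\<^sup>2) (at_right (0::real))"
    unfolding eventually_at_right_field
  proof (intro exI[of _ 1] conjI allI impI)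
    fix t :: real assume t: "0 < t" "t < 1"
    have "y0 + t *\<^sub>R d = (1 - t) *\<^sub>R y0 + t *\<^sub>R y" by (simp add: d_def algebra_simps)
    then have "h (y0 + t *\<^sub>R d) \<le> (1 - t) * h y0 + t * h y - \<mu> / 2 * t * (1 - t) * (norm d)\<^sup>2"
    proof -
      have "h ((1 - t) *\<^sub>R y0 + t *\<^sub>R y) \<le> (1 - t) * h y0 + t * h y - \<mu> / 2 * t * (1 - t) * (norm (y0 - y))\<^sup>2"
        using sc y0 y t by simp
      then show ?thesis using \<open>y0 + t *\<^sub>R d = (1 - t) *\<^sub>R y0 + t *\<^sub>R y\<close> by (simp add: d_def norm_minus_commute)
    qed
    then have "h (y0 + t *\<^sub>R d) - h y0 \<le> t * (h y - h y0 - \<mu> / 2 * (1 - t) * (norm d)\<^sup>2)"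
      by (simp add: algebra_simps)
    then show "(h (y0 + t *\<^sub>R d) - h y0) / t \<le> h y - h y0 - \<mu> / 2 * (1 - t) * (norm d)\<^sup>2"
      using t by (simp add: divide_le_eq mult.commute)
  qed simp
  have "g d \<le> h y - h y0 - \<mu> / 2 * (1 - 0) * (norm d)\<^sup>2"
    by (rule tendsto_le[OF _ lim2 lim1 ev]) simp
  then show ?thesis by (simp add: d_def)
qed

lemma finite_min_pos:
  fixes Q :: "'a \<Rightarrow> real \<Rightarrow> bool"
  assumes "finite S" "\<forall>P\<in>S. \<exists>a>0. Q P a" "\<And>P a a'. Q P a \<Longrightarrow> 0 < a' \<Longrightarrow> a' \<le> a \<Longrightarrow> Q P a'"
  shows "\<exists>a>0. \<forall>P\<in>S. Q P a"
  using assms(1,2)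
proof (induction S rule: finite_induct)
  case empty then show ?case by (intro exI[of _ 1]) auto
next
  case (insert P S)
  then obtain a1 where a1: "a1 > 0" "\<forall>P\<in>S. Q P a1" by auto
  obtain a2 where a2: "a2 > 0" "Q P a2" using insert.prems by auto
  show ?case
    by (rule exI[of _ "min a1 a2"]) (use a1 a2 assms(3) in \<open>auto\<close>)
qed

lemma inner_mv_transpose_rect: "(y::real^'m) \<bullet> ((A::real^'n^'m) *v x) = (transpose A *v y) \<bullet> x"
  by (metis dot_lmul_matrix transpose_transpose vector_transpose_matrix)

lemma sq_norm_convex:
  fixes a b :: "'a::real_inner"
  assumes "u \<ge> 0" "v \<ge> 0" "u + v = 1"
  shows "(norm (u *\<^sub>R a + v *\<^sub>R b))\<^sup>2 \<le> u * (norm a)\<^sup>2 + v * (norm b)\<^sup>2"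
proof -
  have v: "v = 1 - u" using assms by simp
  have "u * (norm a)\<^sup>2 + v * (norm b)\<^sup>2 - (norm (u *\<^sub>R a + v *\<^sub>R b))\<^sup>2 = u * v * (norm (a - b))\<^sup>2"
    unfolding v power2_norm_eq_inner
    by (simp add: inner_add_left inner_add_right inner_diff_left inner_diff_right inner_commute algebra_simps power2_eq_square)
  moreover have "u * v * (norm (a - b))\<^sup>2 \<ge> 0" using assms by simp
  ultimately show ?thesis by linarith
qed



lemma part1:
  fixes A :: "real^'n^'m" and c :: "real^'n" and lam :: real
    and h :: "real^'m \<Rightarrow> real" and p :: "real^'n \<Rightarrow> ereal" and R :: real
  assumes lam: "lam > 0" and tcd: "twice_cont_diff h" and prp: "proper_fun p"
    and cvp: "convex_fun p" and plq: "piecewise_lq p"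
    and fdef: "f = (\<lambda>x. ereal (h (A *v x) - c \<bullet> x) + ereal lam * p x)"
    and Odef: "\<Omega> = {x. \<forall>z. f x \<le> f z}" and One: "\<Omega> \<noteq> {}" and Ocomp: "compact \<Omega>"
    and sc: "strongly_convex_on_compacts h"
  shows "\<exists>\<kappa>>0. \<forall>x. infdist x \<Omega> \<le> R \<longrightarrow> ereal (infdist x \<Omega>) \<le> ereal \<kappa> * edist_set 0 (subdiff f x)"
proof -
  obtain gr where gr: "\<And>y. (h has_derivative (\<lambda>v. gr y \<bullet> v)) (at y)"
    using tcd unfolding twice_cont_diff_def by blast
  have hcont: "continuous_on UNIV h"
    using gr by (meson continuous_at_imp_continuous_on has_derivative_continuous)
  define pr where "pr x = real_of_ereal (p x)" for x
  define D where "D = {x. p x < \<infinity>}"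
  have pD: "p x = ereal (pr x)" if "x \<in> D" for x
    using that prp unfolding D_def pr_def proper_fun_def by (cases "p x") auto
  define F where "F x = h (A *v x) - c \<bullet> x + lam * pr x" for x
  have fD: "f x = ereal (F x)" if "x \<in> D" for x
    using pD[OF that] by (simp add: fdef F_def)
  have fnD: "f x = \<infinity>" if "x \<notin> D" for x
  proof -
    have "p x = \<infinity>" using that unfolding D_def by simp
    then show ?thesis using lam by (simp add: fdef)
  qed
  have pconv: "(1 - t) *\<^sub>R x1 + t *\<^sub>R x2 \<in> D \<and> pr ((1 - t) *\<^sub>R x1 + t *\<^sub>R x2) \<le> (1 - t) * pr x1 + t * pr x2"
    if "x1 \<in> D" "x2 \<in> D" "0 \<le> t" "t \<le> 1" for x1 x2 t
  proof -
    have e1: "(x1, pr x1) \<in> epigraph_e p" "(x2, pr x2) \<in> epigraph_e p"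
      using pD that unfolding epigraph_e_def by auto
    have "(1 - t) *\<^sub>R (x1, pr x1) + t *\<^sub>R (x2, pr x2) \<in> epigraph_e p"
      using convexD_alt[OF cvp[unfolded convex_fun_def] e1 that(3,4)] .
    then have le: "p ((1 - t) *\<^sub>R x1 + t *\<^sub>R x2) \<le> ereal ((1 - t) * pr x1 + t * pr x2)"
      unfolding epigraph_e_def by simp
    have "p ((1 - t) *\<^sub>R x1 + t *\<^sub>R x2) < \<infinity>"
      using le by (rule le_less_trans) simp
    then have inD: "(1 - t) *\<^sub>R x1 + t *\<^sub>R x2 \<in> D" unfolding D_def by simp
    show ?thesis using inD le pD[OF inD] by simp
  qed
  obtain xs where xs: "xs \<in> \<Omega>" using One by blast
  obtain z0 where "p z0 < \<infinity>" using prp unfolding proper_fun_def by blast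
  then have z0D: "z0 \<in> D" unfolding D_def by simp
  have OmD: "x \<in> D" if "x \<in> \<Omega>" for x
  proof (rule ccontr)
    assume "x \<notin> D"
    then have "f x = \<infinity>" by (rule fnD)
    moreover have "f x \<le> f z0" using that Odef by auto
    ultimately show False using fD[OF z0D] by simp
  qed
  have xsD: "xs \<in> D" using OmD xs .
  define Fs where "Fs = F xs"
  have minF: "Fs \<le> F z" if "z \<in> D" for z
  proof -
    have "f xs \<le> f z" using xs Odef by auto
    then show ?thesis using fD[OF xsD] fD[OF that] unfolding Fs_def by simp
  qed
  have inOm: "x \<in> \<Omega>" if "x \<in> D" "F x \<le> Fs" for x
  proof -
    have "f x \<le> f z" for z
    proof (cases "z \<in> D")
      case True then show ?thesis using fD[OF that(1)] fD[OF True] minF[OF True] that(2) by simp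
    next
      case False then show ?thesis using fnD by simp
    qed
    then show ?thesis unfolding Odef by blast
  qed
  have FOm: "F x = Fs" if "x \<in> \<Omega>" for x
  proof -
    have "f x \<le> f xs" using that Odef by auto
    then have "F x \<le> Fs" using fD[OF OmD[OF that]] fD[OF xsD] Fs_def by simp
    then show ?thesis using minF[OF OmD[OF that]] by simp
  qed
  define yb where "yb = A *v xs"
  define g where "g = gr yb"
  define Phi where "Phi x = g \<bullet> (A *v x) - c \<bullet> x + lam * pr x" for x
  have ling: "linear (\<lambda>v. g \<bullet> v)" by (simp add: bounded_linear.linear bounded_linear_inner_right)
  have Phimin: "Phi xs \<le> Phi z" if zD: "z \<in> D" for z
  proof -
    define d where "d = z - xs"
    define L0 where "L0 = c \<bullet> d - lam * (pr z - pr xs)"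
    have lim: "((\<lambda>t. (h (yb + t *\<^sub>R (A *v d)) - h yb) / t) \<longlongrightarrow> g \<bullet> (A *v d)) (at_right 0)"
      using dq_limit[of h "\<lambda>v. g \<bullet> v" yb "A *v d"] gr ling unfolding g_def by simp
    have ev: "eventually (\<lambda>t. L0 \<le> (h (yb + t *\<^sub>R (A *v d)) - h yb) / t) (at_right (0::real))"
      unfolding eventually_at_right_field
    proof (intro exI[of _ 1] conjI allI impI)
      fix t :: real assume t: "0 < t" "t < 1"
      have pc: "(1 - t) *\<^sub>R xs + t *\<^sub>R z \<in> D \<and> pr ((1 - t) *\<^sub>R xs + t *\<^sub>R z) \<le> (1 - t) * pr xs + t * pr z"
        using pconv[OF xsD zD] t by simp
      have xt: "(1 - t) *\<^sub>R xs + t *\<^sub>R z = xs + t *\<^sub>R d" by (simp add: d_def algebra_simps)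
      have Axt: "A *v (xs + t *\<^sub>R d) = yb + t *\<^sub>R (A *v d)"
        by (simp add: yb_def matrix_vector_right_distrib matrix_vector_mult_scaleR)
      have "Fs \<le> F (xs + t *\<^sub>R d)" using minF pc xt by simp
      then have "h yb - c \<bullet> xs + lam * pr xs \<le> h (yb + t *\<^sub>R (A *v d)) - c \<bullet> (xs + t *\<^sub>R d) + lam * pr (xs + t *\<^sub>R d)"
        unfolding Fs_def F_def Axt yb_def by simp
      moreover have "lam * pr (xs + t *\<^sub>R d) \<le> lam * ((1 - t) * pr xs + t * pr z)"
        using pc xt lam by (intro mult_left_mono) auto
      ultimately have "t * L0 \<le> h (yb + t *\<^sub>R (A *v d)) - h yb"
        unfolding L0_def by (simp add: inner_add_right algebra_simps)
      then show "L0 \<le> (h (yb + t *\<^sub>R (A *v d)) - h yb) / t"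
        using t by (simp add: le_divide_eq mult.commute)
    qed simp
    have "L0 \<le> g \<bullet> (A *v d)"
      by (rule tendsto_le[OF _ lim tendsto_const ev]) simp
    then show ?thesis
      unfolding Phi_def L0_def d_def by (simp add: matrix_vector_mult_diff_distrib inner_diff_right algebra_simps)
  qed
  define R' where "R' = max R 0"
  define Rg where "Rg = {x. infdist x \<Omega> \<le> R'}"
  have R'0: "R' \<ge> 0" by (simp add: R'_def)
  have OmRg: "\<Omega> \<subseteq> Rg" unfolding Rg_def using R'0 by auto
  have clOm: "closed \<Omega>" using Ocomp by (rule compact_imp_closed)
  obtain B0 where B0: "\<forall>y\<in>\<Omega>. norm y \<le> B0"
    using compact_imp_bounded[OF Ocomp] unfolding bounded_iff by blast
  have Rgb: "norm x \<le> B0 + R'" if "x \<in> Rg" for x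
  proof -
    obtain y where y: "y \<in> \<Omega>" "infdist x \<Omega> = dist x y"
      using infdist_attains_inf[OF clOm One] by blast
    have "norm x \<le> norm y + norm (x - y)" by (metis add.commute norm_triangle_sub)
    also have "\<dots> \<le> B0 + R'" using B0 y that unfolding Rg_def by (simp add: dist_norm add_mono)
    finally show ?thesis .
  qed
  have cRg: "compact Rg"
  proof -
    have "bounded Rg" unfolding bounded_iff using Rgb by blast
    moreover have "closed Rg" unfolding Rg_def
      by (intro closed_Collect_le continuous_on_infdist continuous_on_id continuous_on_const)
    ultimately show ?thesis by (simp add: compact_eq_bounded_closed)
  qed
  have "compact ((\<lambda>x. A *v x) ` Rg)"
    by (intro compact_continuous_image cRg continuous_intros)
  then have "bounded ((\<lambda>x. A *v x) ` Rg)" by (rule compact_imp_bounded)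
  then obtain \<rho> where "\<forall>y\<in>(\<lambda>x. A *v x) ` Rg. norm y \<le> \<rho>"
    unfolding bounded_iff by blast
  then have \<rho>: "\<forall>x\<in>Rg. norm (A *v x) \<le> \<rho>" by simp
  define K where "K = cball (0::real^'m) \<rho>"
  have "compact K \<and> convex K" unfolding K_def by simp
  then obtain \<mu> where \<mu>: "\<mu> > 0" "\<forall>x\<in>K. \<forall>y\<in>K. \<forall>t. 0 \<le> t \<and> t \<le> 1 \<longrightarrow>
        h ((1 - t) *\<^sub>R x + t *\<^sub>R y) \<le> (1 - t) * h x + t * h y - \<mu> / 2 * t * (1 - t) * (norm (x - y))\<^sup>2"
    using sc unfolding strongly_convex_on_compacts_def strongly_convex_on_def by blast
  have AK: "A *v x \<in> K" if "x \<in> Rg" for x using \<rho> that unfolding K_def by simp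
  have ybK: "yb \<in> K" unfolding yb_def using AK OmRg xs by blast
  have hlow: "h (A *v x) \<ge> h yb + g \<bullet> (A *v x - yb) + \<mu> / 2 * (norm (A *v x - yb))\<^sup>2" if "x \<in> Rg" for x
    using sc_lower[OF \<mu>(2) ybK AK[OF that], of "\<lambda>v. g \<bullet> v"] gr ling unfolding g_def by simp
  have decomp: "F x - Fs \<ge> \<mu> / 2 * (norm (A *v x - yb))\<^sup>2 + (Phi x - Phi xs)" if "x \<in> Rg" for x
  proof -
    have "F x - Fs = h (A *v x) - h yb - g \<bullet> (A *v x - yb) + (Phi x - Phi xs)"
      unfolding F_def Phi_def Fs_def yb_def by (simp add: inner_diff_right)
    then show ?thesis using hlow[OF that] by linarith
  qed
  have Fid: "F x - Fs = h (A *v x) - h yb - g \<bullet> (A *v x - yb) + (Phi x - Phi xs)" for x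
    unfolding F_def Phi_def Fs_def yb_def by (simp add: inner_diff_right)
  have dR: "(infdist x \<Omega>)\<^sup>2 \<le> R'\<^sup>2" if "x \<in> Rg" for x
    using that infdist_nonneg[of x \<Omega>] unfolding Rg_def by (intro power_mono) auto
  obtain S where S: "finite S" "edom p = \<Union>S"
    "\<forall>P\<in>S. polyhedron P \<and> (\<exists>(Q::real^'n^'n) (a::real^'n) (\<alpha>::real). \<forall>x\<in>P. p x = ereal (x \<bullet> (Q *v x) + a \<bullet> x + \<alpha>))"
    using plq unfolding piecewise_lq_def by blast
  have DS: "D = \<Union>S" using S(2) unfolding edom_def D_def by simp
  have hcA: "continuous_on UNIV (\<lambda>x. h (A *v x))"
    by (rule continuous_on_compose2[OF hcont]) (auto intro: continuous_intros)
  have piece: "\<exists>\<alpha>>0. \<forall>x\<in>P \<inter> Rg. \<alpha> * (infdist x \<Omega>)\<^sup>2 \<le> F x - Fs" if PS: "P \<in> S" for P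
  proof -
    have polyP: "polyhedron P" using S(3) PS by blast
    obtain Q :: "real^'n^'n" and a :: "real^'n" and \<alpha>0 :: real
      where quad: "\<forall>x\<in>P. p x = ereal (x \<bullet> (Q *v x) + a \<bullet> x + \<alpha>0)"
      using S(3) PS by blast
    have PD: "P \<subseteq> D" using DS PS by blast
    have prP: "pr x = x \<bullet> (Q *v x) + a \<bullet> x + \<alpha>0" if "x \<in> P" for x
      using quad that unfolding pr_def by simp
    show ?thesis
    proof (cases "P \<inter> \<Omega> = {}")
      case True
      show ?thesis
      proof (cases "P \<inter> Rg = {}")
        case True then show ?thesis by (intro exI[of _ 1]) auto
      next
        case False
        define FP where "FP x = h (A *v x) - c \<bullet> x + lam * (x \<bullet> (Q *v x) + a \<bullet> x + \<alpha>0)" for x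
        have FPF: "FP x = F x" if "x \<in> P" for x unfolding FP_def F_def using prP[OF that] by simp
        have "continuous_on UNIV FP" unfolding FP_def by (intro continuous_intros hcA)
        then have cFP: "continuous_on (P \<inter> Rg) FP" by (rule continuous_on_subset) simp
        have cPR: "compact (P \<inter> Rg)" using polyhedron_imp_closed[OF polyP] cRg by (rule closed_Int_compact)
        obtain xm where xm: "xm \<in> P \<inter> Rg" "\<And>y. y \<in> P \<inter> Rg \<Longrightarrow> FP xm \<le> FP y"
          using continuous_attains_inf[OF cPR False cFP] by blast
        define m where "m = FP xm - Fs"
        have xmD: "xm \<in> D" using xm(1) PD by blast
        have "F xm \<ge> Fs" using minF[OF xmD] .
        moreover have "\<not> F xm \<le> Fs" using inOm[OF xmD] True xm(1) by blast
        ultimately have m0: "m > 0" unfolding m_def using FPF xm(1) by auto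
        show ?thesis
        proof (intro exI[of _ "m / (R'\<^sup>2 + 1)"] conjI ballI)
          have rp: "0 < R'\<^sup>2 + 1" using zero_le_power2[of R'] by linarith
          show "0 < m / (R'\<^sup>2 + 1)" using m0 rp by simp
          fix x assume x: "x \<in> P \<inter> Rg"
          have "(infdist x \<Omega>)\<^sup>2 \<le> R'\<^sup>2 + 1" using dR[of x] x by simp
          then have "m / (R'\<^sup>2 + 1) * (infdist x \<Omega>)\<^sup>2 \<le> m / (R'\<^sup>2 + 1) * (R'\<^sup>2 + 1)"
            using m0 rp by (intro mult_left_mono) auto
          also have "\<dots> = m" using rp by simp
          also have "m \<le> F x - Fs" unfolding m_def using xm(2)[OF x] FPF x by auto
          finally show "m / (R'\<^sup>2 + 1) * (infdist x \<Omega>)\<^sup>2 \<le> F x - Fs" .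
        qed
      qed
    next
      case False
      then obtain z where zP: "z \<in> P" and zO: "z \<in> \<Omega>" by blast
      define Q' where "Q' = lam *\<^sub>R Q + transpose A ** A"
      define a' where "a' = transpose A *v g - c + lam *\<^sub>R a - 2 *\<^sub>R (transpose A *v yb)"
      define \<alpha>' where "\<alpha>' = lam * \<alpha>0 - Phi xs + yb \<bullet> yb"
      define G where "G x = x \<bullet> (Q' *v x) + a' \<bullet> x + \<alpha>'" for x
      have AtA: "x \<bullet> ((transpose A ** A) *v x) = (A *v x) \<bullet> (A *v x)" for x
        by (metis inner_mv_transpose_rect matrix_vector_mul_assoc transpose_transpose)
      have Atv: "(transpose A *v v) \<bullet> x = v \<bullet> (A *v x)" for v x
        by (simp add: inner_mv_transpose_rect)
      have Gid: "G x = g \<bullet> (A *v x) - c \<bullet> x + lam * (x \<bullet> (Q *v x) + a \<bullet> x + \<alpha>0) - Phi xs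
                 + (norm (A *v x - yb))\<^sup>2" for x
      proof -
        have "(norm (A *v x - yb))\<^sup>2 = (A *v x) \<bullet> (A *v x) - 2 * (yb \<bullet> (A *v x)) + yb \<bullet> yb"
          by (simp add: power2_norm_eq_inner inner_diff_left inner_diff_right inner_commute)
        moreover have "x \<bullet> (Q' *v x) = lam * (x \<bullet> (Q *v x)) + (A *v x) \<bullet> (A *v x)"
          unfolding Q'_def by (simp add: matrix_vector_mult_add_rdistrib inner_add_right
              scaleR_matrix_vector_assoc[symmetric] AtA)
        moreover have "a' \<bullet> x = g \<bullet> (A *v x) - c \<bullet> x + lam * (a \<bullet> x) - 2 * (yb \<bullet> (A *v x))"
          unfolding a'_def by (simp add: inner_add_left inner_diff_left dot_lmul_matrix)
        ultimately show ?thesis unfolding G_def \<alpha>'_def by (simp add: algebra_simps)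
      qed
      have GP: "G x = (Phi x - Phi xs) + (norm (A *v x - yb))\<^sup>2" if "x \<in> P" for x
        unfolding Gid Phi_def using prP[OF that] by simp
      have Gnn: "G x \<ge> 0" if "x \<in> P" for x
        using GP[OF that] Phimin[of x] PD that by fastforce
      have zD: "z \<in> D" using PD zP by blast
      have zRg: "z \<in> Rg" using OmRg zO by blast
      have Gz: "G z = 0"
      proof -
        have "F z - Fs = 0" using FOm[OF zO] by simp
        then have "\<mu> / 2 * (norm (A *v z - yb))\<^sup>2 + (Phi z - Phi xs) \<le> 0" using decomp[OF zRg] by linarith
        moreover have "\<mu> / 2 * (norm (A *v z - yb))\<^sup>2 \<ge> 0" using \<mu>(1) by simp
        moreover have "Phi z - Phi xs \<ge> 0" using Phimin[OF zD] by simp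
        ultimately have e1: "\<mu> / 2 * (norm (A *v z - yb))\<^sup>2 = 0" and e2: "Phi z - Phi xs = 0" by linarith+
        from e1 have "(norm (A *v z - yb))\<^sup>2 = 0" using \<mu>(1) by simp
        then show ?thesis using GP[OF zP] e2 by simp
      qed
      have cvxP: "convex P" using polyP by (rule polyhedron_imp_convex)
      have cvG: "convex_on P G"
        unfolding convex_on_def
      proof (intro conjI cvxP ballI allI impI)
        fix x1 x2 and u v :: real assume x1: "x1 \<in> P" and x2: "x2 \<in> P" and u: "0 \<le> u" and v: "0 \<le> v" and uv: "u + v = 1"
        define xt where "xt = u *\<^sub>R x1 + v *\<^sub>R x2"
        have xtP: "xt \<in> P" unfolding xt_def using convexD[OF cvxP x1 x2 u v uv] .
        have u1: "u = 1 - v" using uv by simp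
        have prx: "pr xt \<le> u * pr x1 + v * pr x2"
        proof -
          have v1: "v \<le> 1" using u uv by simp
          have "x1 \<in> D" "x2 \<in> D" using PD x1 x2 by blast+
          from pconv[OF this v v1] show ?thesis unfolding xt_def u1 by blast
        qed
        have "Phi xt \<le> u * Phi x1 + v * Phi x2"
        proof -
          have "g \<bullet> (A *v xt) - c \<bullet> xt = u * (g \<bullet> (A *v x1) - c \<bullet> x1) + v * (g \<bullet> (A *v x2) - c \<bullet> x2)"
            unfolding xt_def by (simp add: matrix_vector_right_distrib matrix_vector_mult_scaleR inner_add_right algebra_simps)
          moreover have "lam * pr xt \<le> u * (lam * pr x1) + v * (lam * pr x2)"
            using mult_left_mono[OF prx, of lam] lam by (simp add: algebra_simps)
          ultimately show ?thesis unfolding Phi_def by (simp add: algebra_simps)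
        qed
        moreover have "(norm (A *v xt - yb))\<^sup>2 \<le> u * (norm (A *v x1 - yb))\<^sup>2 + v * (norm (A *v x2 - yb))\<^sup>2"
        proof -
          have "A *v xt - yb = u *\<^sub>R (A *v x1 - yb) + v *\<^sub>R (A *v x2 - yb)"
            unfolding xt_def u1 by (simp add: matrix_vector_right_distrib matrix_vector_mult_scaleR algebra_simps)
          then show ?thesis using sq_norm_convex[OF u v uv] by simp
        qed
        moreover have "u * G x1 + v * G x2 = (u * Phi x1 + v * Phi x2)
            + (u * (norm (A *v x1 - yb))\<^sup>2 + v * (norm (A *v x2 - yb))\<^sup>2) - (u + v) * Phi xs"
          unfolding GP[OF x1] GP[OF x2] by (simp add: algebra_simps)
        ultimately have "G xt \<le> u * G x1 + v * G x2"
          using GP[OF xtP] uv by simp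
        then show "G (u *\<^sub>R x1 + v *\<^sub>R x2) \<le> u * G x1 + v * G x2" unfolding xt_def .
      qed
      obtain Z C where ZC: "Z \<subseteq> {x\<in>P. G x = 0}" "Z \<noteq> {}" "C \<ge> 0"
        "\<forall>x\<in>P. infdist x Z \<le> C * (sqrt (G x) + G x)"
        using quad_growth[OF G_def polyP zP Gz Gnn cvG] by blast
      have ZO: "Z \<subseteq> \<Omega>"
      proof
        fix x assume "x \<in> Z"
        then have xP: "x \<in> P" and Gx: "G x = 0" using ZC(1) by auto
        have xD: "x \<in> D" using PD xP by blast
        have "Phi x - Phi xs \<ge> 0" using Phimin[OF xD] by simp
        then have "(norm (A *v x - yb))\<^sup>2 = 0" "Phi x - Phi xs = 0"
          using GP[OF xP] Gx by (auto simp: add_nonneg_eq_0_iff)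
        then have "F x - Fs = 0" using Fid[of x] by simp
        then show "x \<in> \<Omega>" using inOm[OF xD] by simp
      qed
      define \<beta> where "\<beta> = min (\<mu> / 2) 1"
      have \<beta>0: "\<beta> > 0" using \<mu>(1) by (simp add: \<beta>_def)
      define \<alpha> where "\<alpha> = \<beta> / (4 * C\<^sup>2 + R'\<^sup>2 + 1)"
      have den: "4 * C\<^sup>2 + R'\<^sup>2 + 1 > 0" using zero_le_power2[of C] zero_le_power2[of R'] by linarith
      show ?thesis
      proof (intro exI[of _ \<alpha>] conjI ballI)
        show "\<alpha> > 0" unfolding \<alpha>_def using \<beta>0 den by simp
        fix x assume x: "x \<in> P \<inter> Rg"
        have xD: "x \<in> D" using PD x by blast
        have G0: "G x \<ge> 0" using Gnn x by blast
        have Phi0: "Phi x - Phi xs \<ge> 0" using Phimin[OF xD] by simp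
        have FG: "F x - Fs \<ge> \<beta> * G x"
        proof -
          have "\<beta> * (norm (A *v x - yb))\<^sup>2 \<le> \<mu> / 2 * (norm (A *v x - yb))\<^sup>2"
            unfolding \<beta>_def by (intro mult_right_mono) auto
          moreover have "\<beta> * (Phi x - Phi xs) \<le> Phi x - Phi xs"
          proof -
            have "\<beta> \<le> 1" unfolding \<beta>_def by simp
            then have "\<beta> * (Phi x - Phi xs) \<le> 1 * (Phi x - Phi xs)" using Phi0 by (rule mult_right_mono)
            then show ?thesis by simp
          qed
          moreover have "\<beta> * G x = \<beta> * (norm (A *v x - yb))\<^sup>2 + \<beta> * (Phi x - Phi xs)"
            using x unfolding GP[of x, OF IntD1[OF x]] by (simp add: algebra_simps)
          moreover have "F x - Fs \<ge> \<mu> / 2 * (norm (A *v x - yb))\<^sup>2 + (Phi x - Phi xs)"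
            using decomp[of x] x by blast
          ultimately show ?thesis by linarith
        qed
        define d where "d = infdist x \<Omega>"
        have d0: "d \<ge> 0" unfolding d_def by (rule infdist_nonneg)
        have dZ: "d \<le> C * (sqrt (G x) + G x)"
          unfolding d_def using infdist_mono[OF ZO ZC(2), of x] ZC(4) x by force
        have dsq: "d\<^sup>2 \<le> (4 * C\<^sup>2 + R'\<^sup>2 + 1) * G x"
        proof (cases "G x \<le> 1")
          case True
          have sG: "G x \<le> sqrt (G x)"
          proof -
            have "sqrt (G x) \<le> 1" using True by simp
            then have "sqrt (G x) * sqrt (G x) \<le> 1 * sqrt (G x)" using G0 by (intro mult_right_mono) auto
            then show ?thesis using G0 by simp
          qed
          then have "d \<le> C * (2 * sqrt (G x))" using dZ ZC(3) by (smt (verit) mult_left_mono)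
          then have "d\<^sup>2 \<le> (C * (2 * sqrt (G x)))\<^sup>2" using d0 by (intro power_mono) auto
          also have "\<dots> = 4 * C\<^sup>2 * G x" using G0 by (simp add: power_mult_distrib)
          also have "\<dots> \<le> (4 * C\<^sup>2 + R'\<^sup>2 + 1) * G x" using G0 by (intro mult_right_mono) auto
          finally show ?thesis .
        next
          case False
          have "d\<^sup>2 \<le> R'\<^sup>2" using dR[of x] x unfolding d_def by blast
          also have "\<dots> \<le> R'\<^sup>2 * G x" using False by (simp add: mult_le_cancel_left1)
          also have "\<dots> \<le> (4 * C\<^sup>2 + R'\<^sup>2 + 1) * G x" using G0 False by (intro mult_right_mono) auto
          finally show ?thesis .
        qed
        have "\<alpha> * d\<^sup>2 \<le> \<alpha> * ((4 * C\<^sup>2 + R'\<^sup>2 + 1) * G x)"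
          using dsq \<beta>0 den unfolding \<alpha>_def by (intro mult_left_mono) auto
        also have "\<dots> = \<beta> * G x" unfolding \<alpha>_def using den by simp
        also have "\<dots> \<le> F x - Fs" by (rule FG)
        finally show "\<alpha> * (infdist x \<Omega>)\<^sup>2 \<le> F x - Fs" unfolding d_def .
      qed
    qed
  qed
  have mono: "\<forall>x\<in>P \<inter> Rg. a' * (infdist x \<Omega>)\<^sup>2 \<le> F x - Fs"
    if "\<forall>x\<in>P \<inter> Rg. a * (infdist x \<Omega>)\<^sup>2 \<le> F x - Fs" "0 < a'" "a' \<le> a" for P a a'
  proof
    fix x assume x: "x \<in> P \<inter> Rg"
    have "a' * (infdist x \<Omega>)\<^sup>2 \<le> a * (infdist x \<Omega>)\<^sup>2" using that(3) by (intro mult_right_mono) auto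
    moreover have "a * (infdist x \<Omega>)\<^sup>2 \<le> F x - Fs" using that(1) x by blast
    ultimately show "a' * (infdist x \<Omega>)\<^sup>2 \<le> F x - Fs" by linarith
  qed
  obtain \<alpha> where \<alpha>: "\<alpha> > 0" "\<forall>P\<in>S. \<forall>x\<in>P \<inter> Rg. \<alpha> * (infdist x \<Omega>)\<^sup>2 \<le> F x - Fs"
    using finite_min_pos[OF S(1), of "\<lambda>P \<alpha>. \<forall>x\<in>P \<inter> Rg. \<alpha> * (infdist x \<Omega>)\<^sup>2 \<le> F x - Fs"] piece mono
    by blast
  have growth: "\<alpha> * (infdist x \<Omega>)\<^sup>2 \<le> F x - Fs" if xD1: "x \<in> D" and xR1: "x \<in> Rg" for x
  proof -
    obtain P where "P \<in> S" "x \<in> P" using xD1 DS by blast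
    then show ?thesis using \<alpha>(2) xR1 by blast
  qed
  show ?thesis
  proof (intro exI[of _ "1 / \<alpha>"] conjI allI impI)
    show "0 < 1 / \<alpha>" using \<alpha>(1) by simp
    fix x assume dx: "infdist x \<Omega> \<le> R"
    have xRg: "x \<in> Rg" using dx unfolding Rg_def R'_def by simp
    show "ereal (infdist x \<Omega>) \<le> ereal (1 / \<alpha>) * edist_set 0 (subdiff f x)"
    proof (cases "subdiff f x = {}")
      case True
      then show ?thesis using \<alpha>(1) by (simp add: edist_set_def)
    next
      case False
      then obtain v0 where "v0 \<in> subdiff f x" by blast
      then have "f x < \<infinity>" unfolding subdiff_def by simp
      then have xD: "x \<in> D" using fnD by force
      obtain xb where xb: "xb \<in> \<Omega>" "infdist x \<Omega> = dist x xb"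
        using infdist_attains_inf[OF clOm One] by blast
      define d where "d = infdist x \<Omega>"
      have d0: "d \<ge> 0" unfolding d_def by (rule infdist_nonneg)
      have key: "\<alpha> * d \<le> norm v" if v: "v \<in> subdiff f x" for v
      proof -
        have "f x + ereal (v \<bullet> (xb - x)) \<le> f xb" using v unfolding subdiff_def by blast
        then have "F x + v \<bullet> (xb - x) \<le> Fs"
          using fD[OF xD] fD[OF OmD[OF xb(1)]] FOm[OF xb(1)] by simp
        moreover have "- (v \<bullet> (xb - x)) \<le> norm v * d"
        proof -
          have "- (v \<bullet> (xb - x)) \<le> \<bar>v \<bullet> (xb - x)\<bar>" by simp
          also have "\<dots> \<le> norm v * norm (xb - x)" by (rule Cauchy_Schwarz_ineq2)
          also have "norm (xb - x) = d" unfolding d_def xb(2) by (simp add: dist_norm norm_minus_commute)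
          finally show ?thesis .
        qed
        ultimately have "\<alpha> * d\<^sup>2 \<le> norm v * d" using growth[OF xD xRg] unfolding d_def by linarith
        show ?thesis
        proof (cases "d = 0")
          case True then show ?thesis by simp
        next
          case False
          then have "d > 0" using d0 by simp
          with \<open>\<alpha> * d\<^sup>2 \<le> norm v * d\<close> show ?thesis
            by (simp add: power2_eq_square mult.assoc[symmetric] mult_le_cancel_right)
        qed
      qed
      have "\<alpha> * d \<le> infdist 0 (subdiff f x)"
        unfolding infdist_def using False key by (auto intro!: cINF_greatest simp: dist_norm)
      then have "d \<le> 1 / \<alpha> * infdist 0 (subdiff f x)" using \<alpha>(1) by (simp add: field_simps)
      then show ?thesis using False unfolding d_def by (simp add: edist_set_def)
    qed
  qed
qed



theorem proposition2p3:
  fixes A :: "real^'n^'m" and c :: "real^'n" and lam :: real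
    and h :: "real^'m \<Rightarrow> real" and p :: "real^'n \<Rightarrow> ereal"
  shows
   "((lam > 0 \<and> convex_on UNIV h \<and> twice_cont_diff h \<and>
      closed_fun p \<and> proper_fun p \<and> convex_fun p \<and> piecewise_lq p \<and>
      (let f = (\<lambda>x. ereal (h (A *v x) - c \<bullet> x) + ereal lam * p x);
           \<Omega> = {x. \<forall>z. f x \<le> f z}
       in \<Omega> \<noteq> {} \<and> compact \<Omega>) \<and>
      strongly_convex_on_compacts h)
     \<longrightarrow>
      (let f = (\<lambda>x. ereal (h (A *v x) - c \<bullet> x) + ereal lam * p x);
           \<Omega> = {x. \<forall>z. f x \<le> f z}
       in \<forall>(\<tau>::real) (x0::real^'n) (\<epsilon>::nat \<Rightarrow> real).
            \<tau> > 0 \<and> (\<forall>k. 0 \<le> \<epsilon> k) \<and> summable \<epsilon> \<longrightarrow>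
            (let M = mat 1 + \<tau> *\<^sub>R (transpose A ** A)
             in \<exists>\<kappa>>0. \<forall>x. infdist x \<Omega> \<le> suminf \<epsilon> + dist_M M x0 \<Omega> \<longrightarrow>
                   ereal (infdist x \<Omega>) \<le> ereal \<kappa> * edist_set 0 (subdiff f x))))
    \<and> (\<forall>b::real^'m. strongly_convex_on_compacts (\<lambda>y::real^'m. \<Sum>i\<in>UNIV. (y $ i - b $ i)\<^sup>2 / 2))
    \<and> (\<forall>b::real^'m. (\<forall>i. b $ i = -1 \<or> b $ i = 1) \<longrightarrow>
         strongly_convex_on_compacts (\<lambda>y::real^'m. \<Sum>i\<in>UNIV. ln (1 + exp (- (b $ i * y $ i)))))"
  proof -
  have P1: "\<And>\<tau> x0 \<epsilon>. lam > 0 \<and> convex_on UNIV h \<and> twice_cont_diff h \<and>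
      closed_fun p \<and> proper_fun p \<and> convex_fun p \<and> piecewise_lq p \<and>
      ({x. \<forall>z. ereal (h (A *v x) - c \<bullet> x) + ereal lam * p x \<le> ereal (h (A *v z) - c \<bullet> z) + ereal lam * p z} \<noteq> {} \<and>
       compact {x. \<forall>z. ereal (h (A *v x) - c \<bullet> x) + ereal lam * p x \<le> ereal (h (A *v z) - c \<bullet> z) + ereal lam * p z}) \<and>
      strongly_convex_on_compacts h \<Longrightarrow>
      \<exists>\<kappa>>0. \<forall>x. infdist x {x. \<forall>z. ereal (h (A *v x) - c \<bullet> x) + ereal lam * p x \<le> ereal (h (A *v z) - c \<bullet> z) + ereal lam * p z}
          \<le> suminf \<epsilon> + dist_M (mat 1 + \<tau> *\<^sub>R (transpose A ** A)) x0 {x. \<forall>z. ereal (h (A *v x) - c \<bullet> x) + ereal lam * p x \<le> ereal (h (A *v z) - c \<bullet> z) + ereal lam * p z} \<longrightarrow>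
        ereal (infdist x {x. \<forall>z. ereal (h (A *v x) - c \<bullet> x) + ereal lam * p x \<le> ereal (h (A *v z) - c \<bullet> z) + ereal lam * p z})
        \<le> ereal \<kappa> * edist_set 0 (subdiff (\<lambda>x. ereal (h (A *v x) - c \<bullet> x) + ereal lam * p x) x)"
    by (rule part1[OF _ _ _ _ _ refl refl]) auto
  show ?thesis
    unfolding Let_def
  proof (intro conjI)
    show "\<forall>b::real^'m. strongly_convex_on_compacts (\<lambda>y::real^'m. \<Sum>i\<in>UNIV. (y $ i - b $ i)\<^sup>2 / 2)"
      using part2 by blast
    show "\<forall>b::real^'m. (\<forall>i. b $ i = -1 \<or> b $ i = 1) \<longrightarrow>
         strongly_convex_on_compacts (\<lambda>y::real^'m. \<Sum>i\<in>UNIV. ln (1 + exp (- (b $ i * y $ i))))"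
      using part3 by blast
  qed (use P1 in blast)
qed

end
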